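(* Let $\tilde P$ be a convex polygon with $k$ vertices $\tilde P_1,\dots,\tilde P_k$, and suppose that exactly $j$ pairs of its sides are parallel, $0\le j\le k/2$. Set $n=k-j$. Then the list of vertices of $\tilde P$ can be rewritten (allowing consecutive repetitions of a vertex) as a list $P_1,\dots,P_{2n}$ (indices modulo $2n$) such that for each $1\le i\le n$, either the side $P_iP_{i+1}$ is parallel to the side $P_{i+n}P_{i+n+1}$, or one of these two sides, say $P_{i+n}P_{i+n+1}$, degenerates to a point; in the latter case the other side $P_iP_{i+1}$ is non-degenerate and the line through $P_{i+n}=P_{i+n+1}$ parallel to $P_iP_{i+1}$ lies outside the interior of $P$. *)

theory Defs
  imports "HOL-Analysis.Analysis"
begin

definition cross2 :: "real^2 \<Rightarrow> real^2 \<Rightarrow> real" where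
  "cross2 u v = u$1 * v$2 - u$2 * v$1"

definition convex_polygon :: "nat \<Rightarrow> (nat \<Rightarrow> real^2) \<Rightarrow> bool" where
  "convex_polygon k p \<longleftrightarrow> k \<ge> 3 \<and>
     ((\<forall>i<k. \<forall>l<k. l \<noteq> i \<and> l \<noteq> (i+1) mod k \<longrightarrow>
          cross2 (p ((i+1) mod k) - p i) (p l - p i) > 0) \<or>
      (\<forall>i<k. \<forall>l<k. l \<noteq> i \<and> l \<noteq> (i+1) mod k \<longrightarrow>
          cross2 (p ((i+1) mod k) - p i) (p l - p i) < 0))"

definition parallel_vec :: "real^2 \<Rightarrow> real^2 \<Rightarrow> bool" where
  "parallel_vec u v \<longleftrightarrow> u \<noteq> 0 \<and> v \<noteq> 0 \<and> (\<exists>c. u = c *\<^sub>R v)"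

definition side_vec :: "nat \<Rightarrow> (nat \<Rightarrow> real^2) \<Rightarrow> nat \<Rightarrow> real^2" where
  "side_vec k p a = p ((a+1) mod k) - p a"

definition num_parallel_pairs :: "nat \<Rightarrow> (nat \<Rightarrow> real^2) \<Rightarrow> nat" where
  "num_parallel_pairs k p =
     card {(a, b). a < b \<and> b < k \<and> parallel_vec (side_vec k p a) (side_vec k p b)}"

definition polygon_interior :: "nat \<Rightarrow> (nat \<Rightarrow> real^2) \<Rightarrow> (real^2) set" where
  "polygon_interior k p = interior (convex hull (p ` {..<k}))"

definition line_dir :: "real^2 \<Rightarrow> real^2 \<Rightarrow> (real^2) set" where
  "line_dir c u = {c + t *\<^sub>R u | t. True}"

end

theory Submission
  imports Defs
begin



definition dot2 :: "real^2 \<Rightarrow> real^2 \<Rightarrow> real" where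
  "dot2 u v = u$1 * v$1 + u$2 * v$2"

lemma vec2_eq: "(u::real^2) = v \<longleftrightarrow> u$1 = v$1 \<and> u$2 = v$2"
  by (simp add: vec_eq_iff forall_2)

lemmas c2 = cross2_def dot2_def

lemma I1: "cross2 a b * cross2 u z = cross2 a z * cross2 u b - cross2 b z * cross2 u a"
  by (simp add: c2 algebra_simps)
lemma I2: "dot2 g g * cross2 u v = dot2 g u * cross2 g v - cross2 g u * dot2 g v"
  by (simp add: c2 algebra_simps)
lemma I4: "cross2 u v * cross2 g w + cross2 v w * cross2 g u + cross2 w u * cross2 g v = 0"
  by (simp add: c2 algebra_simps)
lemma dot_pos: "g \<noteq> 0 \<Longrightarrow> dot2 g g > 0"
proof -
  assume "g \<noteq> 0"
  then have "g$1 \<noteq> 0 \<or> g$2 \<noteq> 0" by (auto simp: vec2_eq)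
  then show ?thesis unfolding dot2_def
    by (metis add_pos_nonneg add_nonneg_pos not_real_square_gt_zero zero_le_square)
qed
lemma cross_anti: "cross2 u v = - cross2 v u" by (simp add: c2)
lemma cross_self[simp]: "cross2 u u = 0" by (simp add: c2)
lemma cross_neg[simp]: "cross2 (-u) v = - cross2 u v" "cross2 u (-v) = - cross2 u v" by (simp_all add: c2)
lemma cross_diff: "cross2 u (v - w) = cross2 u v - cross2 u w" "cross2 (v - w) u = cross2 v u - cross2 w u"
  by (simp_all add: c2 algebra_simps)
lemma cross_add: "cross2 u (v + w) = cross2 u v + cross2 u w" "cross2 (v + w) u = cross2 v u + cross2 w u"
  by (simp_all add: c2 algebra_simps)
lemma cross_scale: "cross2 u (c *\<^sub>R v) = c * cross2 u v" "cross2 (c *\<^sub>R v) u = c * cross2 v u"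
  by (simp_all add: c2 algebra_simps)
lemma dot_sym: "dot2 u v = dot2 v u" by (simp add: c2 algebra_simps)
lemma dot_neg[simp]: "dot2 u (-v) = - dot2 u v" by (simp add: c2)

lemma par_of_cross0:
  assumes "cross2 a b = 0" "b \<noteq> 0"
  shows "a = (dot2 a b / dot2 b b) *\<^sub>R b"
proof -
  have d: "dot2 b b > 0" using dot_pos assms(2) by blast
  have e1: "dot2 b b * a$1 = dot2 a b * b$1" using assms(1) by (simp add: c2 algebra_simps)
  have e2: "dot2 b b * a$2 = dot2 a b * b$2" using assms(1) by (simp add: c2 algebra_simps)
  show ?thesis using d e1 e2 by (simp add: vec2_eq field_simps)
qed

lemma cross0_of_par: "a = c *\<^sub>R b \<Longrightarrow> cross2 a b = 0" by (simp add: cross_scale)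

definition Hp :: "real^2 \<Rightarrow> real^2 \<Rightarrow> bool" where
  "Hp g w \<longleftrightarrow> cross2 g w > 0 \<or> (cross2 g w = 0 \<and> dot2 g w < 0)"

lemma Hp_F: "Hp g w \<Longrightarrow> cross2 g w \<ge> 0" by (auto simp: Hp_def)

lemma MaxEl: assumes "g \<noteq> 0" "Hp g u" "cross2 g u = 0" "Hp g v" shows "cross2 u v \<le> 0"
proof -
  have d: "dot2 g u < 0" using assms(2,3) by (auto simp: Hp_def)
  have "dot2 g g * cross2 u v = dot2 g u * cross2 g v" using I2[of g u v] assms(3) by simp
  moreover have "dot2 g u * cross2 g v \<le> 0" using d Hp_F[OF assms(4)] by (simp add: mult_nonpos_nonneg)
  ultimately show ?thesis using dot_pos[OF assms(1)] by (metis mult_le_0_iff not_less)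
qed

lemma ZeroProp: assumes "Hp g u" "cross2 g u = 0" "cross2 u v = 0" shows "cross2 g v = 0"
proof -
  have d: "dot2 g u < 0" using assms(1,2) by (auto simp: Hp_def)
  have "dot2 g g * cross2 u v = dot2 g u * cross2 g v" using I2[of g u v] assms(2) by simp
  then show ?thesis using assms(3) d by simp
qed

lemma T1: assumes g: "g \<noteq> 0" and h: "Hp g u" "Hp g v" "Hp g w"
  and "cross2 u v > 0" "cross2 v w > 0" shows "cross2 u w > 0"
proof (rule ccontr)
  assume "\<not> ?thesis"
  hence c: "cross2 w u \<ge> 0" using cross_anti[of w u] by simp
  have s: "cross2 u v * cross2 g w + cross2 v w * cross2 g u + cross2 w u * cross2 g v = 0" by (rule I4)
  have f: "cross2 g w \<ge> 0" "cross2 g u \<ge> 0" "cross2 g v \<ge> 0" using h Hp_F by auto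
  have p1: "cross2 u v * cross2 g w \<ge> 0" "cross2 v w * cross2 g u \<ge> 0" "cross2 w u * cross2 g v \<ge> 0"
    using f c assms by auto
  hence "cross2 v w * cross2 g u = 0" using s by linarith
  hence "cross2 g u = 0" using assms by simp
  from MaxEl[OF g h(1) this h(2)] assms show False by simp
qed

lemma T2: assumes g: "g \<noteq> 0" and h: "Hp g u" "Hp g v" "Hp g w"
  and "cross2 u v = 0" "cross2 v w > 0" shows "cross2 u w > 0"
proof (rule ccontr)
  assume "\<not> ?thesis"
  hence c: "cross2 w u \<ge> 0" using cross_anti[of w u] by simp
  have s: "cross2 u v * cross2 g w + cross2 v w * cross2 g u + cross2 w u * cross2 g v = 0" by (rule I4)
  have f: "cross2 g w \<ge> 0" "cross2 g u \<ge> 0" "cross2 g v \<ge> 0" using h Hp_F by auto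
  have p1: "cross2 v w * cross2 g u \<ge> 0" "cross2 w u * cross2 g v \<ge> 0"
    using f c assms by auto
  have s': "cross2 v w * cross2 g u + cross2 w u * cross2 g v = 0" using s assms by simp
  have "cross2 v w * cross2 g u = 0" using s' p1 by linarith
  hence "cross2 g u = 0" using assms by simp
  hence "cross2 g v = 0" using ZeroProp[OF h(1)] assms by blast
  from MaxEl[OF g h(2) this h(3)] assms show False by simp
qed

lemma T3: assumes g: "g \<noteq> 0" and h: "Hp g u" "Hp g v" "Hp g w"
  and "cross2 u v > 0" "cross2 v w = 0" shows "cross2 u w > 0"
proof (rule ccontr)
  assume "\<not> ?thesis"
  hence c: "cross2 w u \<ge> 0" using cross_anti[of w u] by simp
  have s: "cross2 u v * cross2 g w + cross2 v w * cross2 g u + cross2 w u * cross2 g v = 0" by (rule I4)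
  have f: "cross2 g w \<ge> 0" "cross2 g u \<ge> 0" "cross2 g v \<ge> 0" using h Hp_F by auto
  have p1: "cross2 u v * cross2 g w \<ge> 0" "cross2 w u * cross2 g v \<ge> 0"
    using f c assms by auto
  have s': "cross2 u v * cross2 g w + cross2 w u * cross2 g v = 0" using s assms by simp
  have "cross2 u v * cross2 g w = 0" using s' p1 by linarith
  hence fw: "cross2 g w = 0" using assms by simp
  have "cross2 w u \<le> 0" using MaxEl[OF g h(3) fw h(1)] .
  hence "cross2 w u = 0" using c by simp
  hence "cross2 g u = 0" using ZeroProp[OF h(3) fw] by blast
  from MaxEl[OF g h(1) this h(2)] assms show False by simp
qed




lemma mod_next_ne: "x < k \<Longrightarrow> 2 \<le> k \<Longrightarrow> (x+1) mod k \<noteq> (x::nat)"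
proof
  assume a: "x < k" "2 \<le> k" "(x+1) mod k = x"
  show False
  proof (cases "x + 1 < k")
    case True then show ?thesis using a by simp
  next
    case False
    hence "x + 1 = k" using a by simp
    thus ?thesis using a by simp
  qed
qed

lemma mod_next2_ne: "x < k \<Longrightarrow> 3 \<le> k \<Longrightarrow> (x+2) mod k \<noteq> (x::nat)"
proof
  assume a: "x < k" "3 \<le> k" "(x+2) mod k = x"
  show False
  proof (cases "x + 2 < k")
    case True then show ?thesis using a by simp
  next
    case False
    hence "(x+2) mod k = (x+2-k) mod k" using le_mod_geq by simp
    also have "\<dots> = x+2-k" using a False by simp
    finally show ?thesis using a False by simp
  qed
qed

locale ccw =
  fixes k :: nat and p :: "nat \<Rightarrow> real^2"
  assumes k3: "k \<ge> 3"
  and ccw: "\<And>i l. i<k \<Longrightarrow> l<k \<Longrightarrow> l \<noteq> i \<Longrightarrow> l \<noteq> (i+1) mod k \<Longrightarrow>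
            cross2 (p((i+1) mod k) - p i) (p l - p i) > 0"
begin

abbreviation E where "E \<equiv> side_vec k p"

lemma E_def': "E i = p((i+1) mod k) - p i" by (simp add: side_vec_def)

lemma left_strict: "i<k \<Longrightarrow> l<k \<Longrightarrow> l \<noteq> i \<Longrightarrow> l \<noteq> (i+1) mod k \<Longrightarrow> cross2 (E i) (p l - p i) > 0"
  using ccw by (simp add: E_def')

lemma left: "i<k \<Longrightarrow> l<k \<Longrightarrow> cross2 (E i) (p l - p i) \<ge> 0"
proof -
  assume a: "i<k" "l<k"
  show ?thesis
  proof (cases "l = i \<or> l = (i+1) mod k")
    case True then show ?thesis by (auto simp: E_def' c2)
  next
    case False then show ?thesis using left_strict[OF a] by fastforce
  qed
qed

lemma turn: assumes "i<k" shows "cross2 (E i) (E ((i+1) mod k)) > 0"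
proof -
  define j where "j = (i+1) mod k"
  define l where "l = (j+1) mod k"
  have k0: "k > 0" using k3 by simp
  have jk: "j < k" "l < k" using k0 by (simp_all add: j_def l_def)
  have l2: "l = (i+2) mod k" unfolding l_def j_def by (simp add: mod_Suc_eq)
  have "l \<noteq> i" using l2 mod_next2_ne[OF assms k3] by simp
  moreover have "l \<noteq> j" unfolding l_def using mod_next_ne[OF jk(1)] k3 by simp
  ultimately have "cross2 (E i) (p l - p i) > 0" using left_strict[OF assms jk(2)] j_def by simp
  moreover have "p l - p i = E j + E i" by (simp add: E_def' l_def j_def)
  ultimately show ?thesis by (simp add: cross_add j_def)
qed

lemma E_nz: "i<k \<Longrightarrow> E i \<noteq> 0"
proof
  assume "i<k" "E i = 0"
  then show False using turn[of i] by (simp add: c2)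
qed

definition prv where "prv c = (c + k - 1) mod k"

lemma prv: "c < k \<Longrightarrow> prv c < k \<and> (prv c + 1) mod k = c"
proof -
  assume c: "c<k"
  have k0: "k > 0" using k3 by simp
  have "(prv c + 1) mod k = (c + k - 1 + 1) mod k" unfolding prv_def by (simp add: mod_Suc_eq)
  also have "\<dots> = c" using c k0 by simp
  finally show ?thesis using k0 by (simp add: prv_def)
qed

lemma prv_pos: "0 < c \<Longrightarrow> c < k \<Longrightarrow> prv c = c - 1"
proof -
  assume c: "0 < c" "c < k"
  have e: "c + k - 1 = (c - 1) + k" using c by simp
  have "prv c = ((c - 1) + k) mod k" unfolding prv_def by (metis e)
  also have "\<dots> = (c - 1) mod k" by (rule mod_add_self2)
  also have "\<dots> = c - 1" using c by simp
  finally show ?thesis .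
qed

lemma prv_0: "prv 0 = k - 1"
  using k3 unfolding prv_def by simp

lemma W: assumes c: "c<k" and q: "q<k" and h1: "cross2 u (E (prv c)) \<le> 0" and h2: "cross2 u (E c) \<ge> 0"
  shows "cross2 u (p q - p c) \<ge> 0"
proof -
  define a where "a = E (prv c)"
  define b where "b = E c"
  have pc: "prv c < k" "(prv c + 1) mod k = c" using prv[OF c] by auto
  have D: "cross2 a b > 0" using turn[OF pc(1)] pc(2) by (simp add: a_def b_def)
  have aE: "a = p c - p (prv c)" using pc by (simp add: a_def E_def')
  have "cross2 a (p q - p c) = cross2 a (p q - p (prv c))"
    by (simp add: aE c2 algebra_simps)
  hence za: "cross2 a (p q - p c) \<ge> 0" using left[OF pc(1) q] by (simp add: a_def)
  have zb: "cross2 b (p q - p c) \<ge> 0" using left[OF c q] by (simp add: b_def)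
  have "cross2 a b * cross2 u (p q - p c) = cross2 a (p q - p c) * cross2 u b - cross2 b (p q - p c) * cross2 u a"
    by (rule I1)
  moreover have "cross2 a (p q - p c) * cross2 u b \<ge> 0"
    using za h2 by (simp add: b_def mult_nonneg_nonneg)
  moreover have "cross2 b (p q - p c) * cross2 u a \<le> 0"
    using zb h1 by (simp add: a_def mult_nonneg_nonpos)
  ultimately have "0 \<le> cross2 a b * cross2 u (p q - p c)" by linarith
  thus ?thesis using D by (simp add: zero_le_mult_iff)
qed

lemma HS: assumes a: "a<k" and b: "b<k" "a \<noteq> b" and cr: "cross2 (E a) (E b) = 0"
  and dt: "dot2 (E a) (E b) \<ge> 0" shows "b = (a+1) mod k"
proof (rule ccontr)
  assume nb: "b \<noteq> (a+1) mod k"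
  have "dot2 (E b) (E b) * cross2 (E a) (p b - p a) =
      dot2 (E b) (E a) * cross2 (E b) (p b - p a) - cross2 (E b) (E a) * dot2 (E b) (p b - p a)"
    by (rule I2)
  moreover have "cross2 (E b) (E a) = 0" using cr cross_anti[of "E b" "E a"] by simp
  moreover have "cross2 (E b) (p b - p a) \<le> 0"
    using left[OF b(1) a] by (simp add: cross_diff)
  moreover have "dot2 (E b) (E a) \<ge> 0" using dt dot_sym[of "E b" "E a"] by simp
  ultimately have "dot2 (E b) (E b) * cross2 (E a) (p b - p a) \<le> 0"
    by (simp add: mult_nonneg_nonpos)
  moreover have "dot2 (E b) (E b) > 0" using dot_pos E_nz b by blast
  moreover have "cross2 (E a) (p b - p a) > 0" using left_strict[OF a b(1)] b nb by simp
  ultimately show False by (simp add: mult_le_0_iff)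
qed

lemma NoSame: assumes a: "a<k" and b: "b<k" "a \<noteq> b" and cr: "cross2 (E a) (E b) = 0"
  shows "dot2 (E a) (E b) < 0"
proof (rule ccontr)
  assume "\<not> ?thesis"
  hence d: "dot2 (E a) (E b) \<ge> 0" by simp
  have 1: "b = (a+1) mod k" using HS[OF a b cr d] .
  have "cross2 (E b) (E a) = 0" using cr cross_anti[of "E b" "E a"] by simp
  moreover have "dot2 (E b) (E a) \<ge> 0" using d dot_sym[of "E b" "E a"] by simp
  ultimately have 2: "a = (b+1) mod k" using HS[OF b(1) a] b by metis
  have "a = ((a+1) mod k + 1) mod k" using 1 2 by metis
  also have "\<dots> = (a+2) mod k" by (simp add: mod_Suc_eq)
  finally have "a = (a+2) mod k" .
  thus False using mod_next2_ne[OF a k3] by simp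
qed

end



context ccw begin

abbreviation g where "g \<equiv> E (k-1)"
definition m where "m = (LEAST t. cross2 g (E t) < 0)"

lemma k0: "0 < k" using k3 by simp

lemma F0: "cross2 g (E 0) > 0"
proof -
  have "((k-1)+1) mod k = 0" using k3 by simp
  thus ?thesis using turn[of "k-1"] k3 by simp
qed

lemma Fk2: "cross2 g (E (k-2)) < 0"
proof -
  have e: "((k-2)+1) mod k = k-1" using k3 by simp
  have e2: "Suc (k-2) = k - 1" using k3 by simp
  have "cross2 (E (k-2)) g > 0" using turn[of "k-2"] k3 by (simp add: e e2)
  thus ?thesis using cross_anti[of g "E (k-2)"] by simp
qed

lemma m_props: "cross2 g (E m) < 0" "m \<le> k-2" "1 \<le> m"
proof -
  show "cross2 g (E m) < 0" unfolding m_def by (rule LeastI, rule Fk2)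
  show "m \<le> k-2" unfolding m_def by (rule Least_le, rule Fk2)
  have "m \<noteq> 0" using F0 \<open>cross2 g (E m) < 0\<close> by (metis not_less_iff_gr_or_eq)
  thus "1 \<le> m" by simp
qed

lemma below_m: "t < m \<Longrightarrow> cross2 g (E t) \<ge> 0"
  unfolding m_def using not_less_Least by fastforce

lemma above_m: assumes "m \<le> t" shows "t \<le> k-2 \<longrightarrow> cross2 g (E t) < 0"
  using assms
proof (induction t rule: nat_induct_at_least)
  case base then show ?case using m_props by simp
next
  case (Suc t)
  show ?case
  proof
    assume t2: "Suc t \<le> k-2"
    have Ft: "cross2 g (E t) < 0" using Suc t2 by simp
    show "cross2 g (E (Suc t)) < 0"
    proof (rule ccontr)
      assume "\<not> ?thesis"
      hence h2: "cross2 g (E (Suc t)) \<ge> 0" by simp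
      have ck: "Suc t < k" using t2 k3 by simp
      have pv: "prv (Suc t) = t" using prv_pos[OF _ ck] by simp
      have "cross2 g (p (k-1) - p (Suc t)) \<ge> 0"
        using W[OF ck _ _ h2, of "k-1"] pv Ft k3 by simp
      moreover have "cross2 g (p (Suc t) - p (k-1)) > 0"
      proof (rule left_strict)
        show "k-1 < k" "Suc t < k" using ck k3 by auto
        show "Suc t \<noteq> k-1" using t2 by simp
        have "(k-1+1) mod k = 0" using k3 by simp
        thus "Suc t \<noteq> (k-1+1) mod k" by simp
      qed
      ultimately show False by (simp add: c2 algebra_simps)
    qed
  qed
qed

lemma g_nz: "g \<noteq> 0" using E_nz k3 by simp

lemma A_Hp: assumes "i < m" shows "Hp g (E i)"
proof -
  have ik: "i < k" "i \<noteq> k-1" using assms m_props k3 by auto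
  have F: "cross2 g (E i) \<ge> 0" using below_m assms by simp
  show ?thesis
  proof (cases "cross2 g (E i) = 0")
    case True
    hence "cross2 (E i) g = 0" using cross_anti[of "E i" g] by simp
    hence "dot2 (E i) g < 0" using NoSame[OF ik(1) _ ik(2)] k3 by simp
    thus ?thesis using True dot_sym[of g "E i"] by (simp add: Hp_def)
  next
    case False then show ?thesis using F by (simp add: Hp_def)
  qed
qed

lemma B_Hp: assumes "m \<le> l" "l < k" shows "Hp g (- E l)"
proof (cases "l = k-1")
  case True
  have "dot2 g g > 0" using dot_pos g_nz by blast
  then show ?thesis using True by (simp add: Hp_def)
next
  case False
  hence "l \<le> k-2" using assms by simp
  then show ?thesis using above_m[OF assms(1)] by (simp add: Hp_def)
qed

lemma S1: "a < b \<Longrightarrow> b < m \<Longrightarrow> cross2 (E a) (E b) > 0"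
proof (induction b)
  case 0 then show ?case by simp
next
  case (Suc b)
  have bk: "Suc b < k" using Suc m_props k3 by simp
  have tb: "cross2 (E b) (E (Suc b)) > 0" using turn[of b] bk by simp
  show ?case
  proof (cases "a = b")
    case True then show ?thesis using tb by simp
  next
    case False
    hence ab: "a < b" using Suc by simp
    have "cross2 (E a) (E b) > 0" using Suc ab by simp
    then show ?thesis using T1[OF g_nz A_Hp A_Hp A_Hp _ tb] ab Suc by simp
  qed
qed

lemma S2: "m \<le> a \<Longrightarrow> a < b \<Longrightarrow> b < k \<Longrightarrow> cross2 (E a) (E b) > 0"
proof (induction b)
  case 0 then show ?case by simp
next
  case (Suc b)
  have tb: "cross2 (E b) (E (Suc b)) > 0" using turn[of b] Suc by simp
  show ?case
  proof (cases "a = b")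
    case True then show ?thesis using tb by simp
  next
    case False
    hence ab: "a < b" using Suc by simp
    have "cross2 (E a) (E b) > 0" using Suc ab by simp
    hence "cross2 (- E a) (- E (Suc b)) > 0"
      using T1[OF g_nz B_Hp B_Hp B_Hp, of a b "Suc b"] tb ab Suc by simp
    then show ?thesis by simp
  qed
qed

end



context ccw begin

definition isdiag :: "nat \<times> nat \<Rightarrow> bool" where
  "isdiag s \<longleftrightarrow> fst s < m \<and> snd s < k \<and> cross2 (E (fst s)) (E (snd s)) = 0"

definition nxt :: "nat \<times> nat \<Rightarrow> nat \<times> nat" where
  "nxt s = (let i = fst s; l = snd s in
     if isdiag s then (i+1, l+1)
     else if i < m \<and> (k \<le> l \<or> cross2 (E i) (E l) < 0) then (i+1, l)
     else (i, l+1))"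

definition Inv :: "nat \<times> nat \<Rightarrow> bool" where
  "Inv s \<longleftrightarrow> (let i = fst s; l = snd s in
     i \<le> m \<and> m \<le> l \<and> l \<le> k \<and> (l = k \<longrightarrow> i = m) \<and>
     (0 < i \<and> l < k \<longrightarrow> cross2 (E (i-1)) (E l) < 0) \<and>
     (m < l \<and> i < m \<longrightarrow> cross2 (E i) (E (l-1)) > 0))"

lemma nxt_sum: "fst (nxt s) + snd (nxt s) = fst s + snd s + 1 + (if isdiag s then 1 else 0)"
  by (simp add: nxt_def Let_def)

lemma nxt_fst: "fst (nxt s) = fst s \<or> fst (nxt s) = Suc (fst s)"
  by (simp add: nxt_def Let_def)
lemma nxt_snd: "snd (nxt s) = snd s \<or> snd (nxt s) = Suc (snd s)"
  by (simp add: nxt_def Let_def)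

lemma m_lt_k: "m < k" using m_props(2) k3 by linarith

lemma Inv0: "Inv (0, m)" using m_lt_k by (simp add: Inv_def Let_def)

lemma turnS: "l + 1 < k \<Longrightarrow> cross2 (E l) (E (l+1)) > 0"
  using turn[of l] by simp

lemma Inv_step:
  assumes I: "Inv (i,l)" and ne: "(i,l) \<noteq> (m,k)"
  shows "Inv (nxt (i,l))"
proof -
  have im: "i \<le> m" and ml: "m \<le> l" and lk: "l < k"
    and I1: "0 < i \<Longrightarrow> cross2 (E (i-1)) (E l) < 0"
    and I2: "m < l \<Longrightarrow> i < m \<Longrightarrow> cross2 (E i) (E (l-1)) > 0"
    using I ne by (auto simp: Inv_def)
  have mk: "m \<le> k-2" "1 \<le> m" using m_props by auto
  show ?thesis
  proof (cases "isdiag (i,l)")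
    case True
    hence d: "i < m" "cross2 (E i) (E l) = 0" by (auto simp: isdiag_def)
    have n: "nxt (i,l) = (i+1, l+1)" using True by (simp add: nxt_def)
    have c1: "l+1 = k \<Longrightarrow> i+1 = m"
    proof (rule ccontr)
      assume a: "l+1 = k" "i+1 \<noteq> m"
      hence im1: "i < m-1" using d by simp
      have lk1: "l = k-1" using a by simp
      have "cross2 g (E i) = 0" using d cross_anti[of "E l" "E i"] lk1 by simp
      hence "cross2 (E i) (E (m-1)) \<le> 0" using MaxEl[OF g_nz A_Hp[OF d(1)] _ A_Hp, of "m-1"] mk by simp
      moreover have "cross2 (E i) (E (m-1)) > 0" using S1[OF im1] mk by simp
      ultimately show False by simp
    qed
    have c2': "l+1 < k \<Longrightarrow> cross2 (E i) (E (l+1)) < 0"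
    proof -
      assume a: "l+1 < k"
      have "cross2 (E i) (- E (l+1)) > 0"
        using T2[OF g_nz A_Hp[OF d(1)] B_Hp[OF ml lk] B_Hp, of "l+1"] d turnS[OF a] a ml by simp
      thus ?thesis by simp
    qed
    have c3: "i+1 < m \<Longrightarrow> cross2 (E (i+1)) (E l) > 0"
    proof -
      assume a: "i+1 < m"
      have t: "cross2 (E i) (E (i+1)) > 0" using turnS[of i] a mk by simp
      have z: "cross2 (- E l) (E i) = 0" using d(2) cross_anti[of "E l" "E i"] by simp
      have "cross2 (- E l) (E (i+1)) > 0"
        using T2[OF g_nz B_Hp[OF ml lk] A_Hp[OF d(1)] A_Hp[OF a] z t] .
      thus ?thesis using cross_anti[of "E l" "E (i+1)"] by simp
    qed
    show ?thesis unfolding n Inv_def Let_def using c1 c2' c3 im ml lk d by auto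
  next
    case False
    note nd = False
    show ?thesis
    proof (cases "i < m \<and> (k \<le> l \<or> cross2 (E i) (E l) < 0)")
      case True
      hence d: "i < m" "cross2 (E i) (E l) < 0" using lk by auto
      have n: "nxt (i,l) = (i+1, l)" using True nd by (simp add: nxt_def)
      have c3: "m < l \<Longrightarrow> i+1 < m \<Longrightarrow> cross2 (E (i+1)) (E (l-1)) > 0"
      proof -
        assume a: "m < l" "i+1 < m"
        have t: "cross2 (E i) (E (i+1)) > 0" using turnS[of i] a mk by simp
        have h: "cross2 (- E (l-1)) (E i) > 0" using I2[OF a(1) d(1)] cross_anti[of "E (l-1)" "E i"] by simp
        have "cross2 (- E (l-1)) (E (i+1)) > 0"
          using T1[OF g_nz B_Hp A_Hp[OF d(1)] A_Hp[OF a(2)] h t] a lk by simp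
        thus ?thesis using cross_anti[of "E (l-1)" "E (i+1)"] by simp
      qed
      show ?thesis unfolding n Inv_def Let_def using c3 im ml lk d by auto
    next
      case False
      have n: "nxt (i,l) = (i, l+1)" using False nd by (simp add: nxt_def)
      have gt: "i < m \<Longrightarrow> cross2 (E i) (E l) > 0" using False nd lk by (auto simp: isdiag_def)
      have c1: "l+1 = k \<Longrightarrow> i = m"
      proof (rule ccontr)
        assume a: "l+1 = k" "i \<noteq> m"
        hence "i < m" using im by simp
        hence "cross2 (E i) g > 0" using gt a by (metis add_diff_cancel_right')
        moreover have "cross2 g (E i) \<ge> 0" using below_m \<open>i<m\<close> by simp
        ultimately show False using cross_anti[of g "E i"] by simp
      qed
      have c2': "0 < i \<Longrightarrow> l+1 < k \<Longrightarrow> cross2 (E (i-1)) (E (l+1)) < 0"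
      proof -
        assume a: "0 < i" "l+1 < k"
        have h: "cross2 (E (i-1)) (- E l) > 0" using I1[OF a(1)] by simp
        have t: "cross2 (- E l) (- E (l+1)) > 0" using turnS[OF a(2)] by simp
        have "cross2 (E (i-1)) (- E (l+1)) > 0"
          using T1[OF g_nz A_Hp B_Hp[OF ml lk] B_Hp h t] a im ml by simp
        thus ?thesis by simp
      qed
      show ?thesis unfolding n Inv_def Let_def using c1 c2' gt im ml lk by auto
    qed
  qed
qed

end



lemma ivt_step:
  assumes "\<forall>t<N. f (Suc t) = f t \<or> f (Suc t) = Suc (f t)" "f 0 \<le> a" "a < f N"
  shows "\<exists>t<N. f t = a \<and> f (Suc t) = Suc a"
  using assms
proof (induction N)
  case 0 then show ?case by simp
next
  case (Suc N)
  show ?case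
  proof (cases "a < f N")
    case True
    then obtain t where "t<N" "f t = a \<and> f (Suc t) = Suc a" using Suc by auto
    then show ?thesis by (intro exI[of _ t]) auto
  next
    case False
    have "f (Suc N) = f N \<or> f (Suc N) = Suc (f N)" using Suc.prems(1) by simp
    then have "f N = a" using Suc.prems(3) False by linarith
    then show ?thesis using Suc.prems(1,3) by (intro exI[of _ N]) auto
  qed
qed

context ccw begin

definition st where "st t = (nxt ^^ t) (0, m)"

lemma st_0: "st 0 = (0, m)" by (simp add: st_def)
lemma st_Suc: "st (Suc t) = nxt (st t)" by (simp add: st_def)

lemma Inv_bound: "Inv s \<Longrightarrow> fst s + snd s \<le> m + k"
  by (auto simp: Inv_def Let_def)

lemma reach: "\<exists>T. st T = (m,k)"
proof -
  have "\<forall>t. (\<exists>s\<le>t. st s = (m,k)) \<or> (Inv (st t) \<and> m + t \<le> fst (st t) + snd (st t))"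
  proof
    fix t show "(\<exists>s\<le>t. st s = (m,k)) \<or> (Inv (st t) \<and> m + t \<le> fst (st t) + snd (st t))"
    proof (induction t)
      case 0 then show ?case using Inv0 by (simp add: st_0)
    next
      case (Suc t)
      show ?case
      proof (cases "\<exists>s\<le>t. st s = (m,k)")
        case True then show ?thesis using le_SucI by blast
      next
        case False
        hence I: "Inv (st t)" "m + t \<le> fst (st t) + snd (st t)" "st t \<noteq> (m,k)" using Suc by auto
        have "Inv (st (Suc t))" using Inv_step[of "fst (st t)" "snd (st t)"] I by (simp add: st_Suc)
        moreover have "m + Suc t \<le> fst (st (Suc t)) + snd (st (Suc t))"
          using nxt_sum[of "st t"] I(2) by (simp add: st_Suc)
        ultimately show ?thesis by simp
      qed
    qed
  qed
  hence "(\<exists>s\<le>k+1. st s = (m,k)) \<or> (Inv (st (k+1)) \<and> m + (k+1) \<le> fst (st (k+1)) + snd (st (k+1)))"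
    by blast
  thus ?thesis using Inv_bound[of "st (k+1)"] by auto
qed

definition N where "N = (LEAST t. st t = (m,k))"

lemma stN: "st N = (m,k)" unfolding N_def using reach by (rule LeastI_ex)
lemma before_N: "t < N \<Longrightarrow> st t \<noteq> (m,k)" unfolding N_def using not_less_Least by blast

lemma Inv_st: "t \<le> N \<Longrightarrow> Inv (st t)"
proof (induction t)
  case 0 then show ?case using Inv0 by (simp add: st_0)
next
  case (Suc t)
  hence "Inv (st t)" "st t \<noteq> (m,k)" using before_N by auto
  then show ?case using Inv_step[of "fst (st t)" "snd (st t)"] by (simp add: st_Suc)
qed

lemma st_lk: "t < N \<Longrightarrow> snd (st t) < k \<and> fst (st t) \<le> m \<and> m \<le> snd (st t)"
  using Inv_st[of t] before_N[of t] by (cases "st t") (auto simp: Inv_def Let_def)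

definition Dg where "Dg = {s. s < N \<and> isdiag (st s)}"

lemma sum_st: "fst (st t) + snd (st t) = m + t + card {s. s < t \<and> isdiag (st s)}"
proof (induction t)
  case 0 then show ?case by (simp add: st_0)
next
  case (Suc t)
  have e: "{s. s < Suc t \<and> isdiag (st s)} = {s. s < t \<and> isdiag (st s)} \<union> (if isdiag (st t) then {t} else {})"
    by (auto simp: less_Suc_eq)
  have "card {s. s < Suc t \<and> isdiag (st s)} = card {s. s < t \<and> isdiag (st s)} + (if isdiag (st t) then 1 else 0)"
    unfolding e by (auto simp: card_insert_if)
  then show ?case using Suc nxt_sum[of "st t"] by (simp add: st_Suc)
qed

lemma N_count: "N + card Dg = k"
  using sum_st[of N] stN unfolding Dg_def by simp

lemma sum_strict: "s < t \<Longrightarrow> fst (st s) + snd (st s) < fst (st t) + snd (st t)"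
proof -
  assume "s < t"
  moreover have "card {x. x < s \<and> isdiag (st x)} \<le> card {x. x < t \<and> isdiag (st x)}"
    by (rule card_mono) (use \<open>s<t\<close> in auto)
  ultimately show ?thesis using sum_st[of s] sum_st[of t] by simp
qed

lemma st_inj: "inj st"
proof (rule injI)
  fix x y assume "st x = st y"
  thus "x = y" using sum_strict[of x y] sum_strict[of y x] by (metis nat_neq_iff less_irrefl)
qed

lemma fst_mono: "s \<le> t \<Longrightarrow> fst (st s) \<le> fst (st t)"
proof -
  assume "s \<le> t"
  have "\<And>n. fst (st n) \<le> fst (st (Suc n))"
  proof -
    fix n show "fst (st n) \<le> fst (st (Suc n))" using nxt_fst[of "st n"] unfolding st_Suc by linarith
  qed
  thus ?thesis using lift_Suc_mono_le[of "\<lambda>t. fst (st t)"] \<open>s \<le> t\<close> by blast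
qed

lemma snd_mono: "s \<le> t \<Longrightarrow> snd (st s) \<le> snd (st t)"
proof -
  assume "s \<le> t"
  have "\<And>n. snd (st n) \<le> snd (st (Suc n))"
  proof -
    fix n show "snd (st n) \<le> snd (st (Suc n))" using nxt_snd[of "st n"] unfolding st_Suc by linarith
  qed
  thus ?thesis using lift_Suc_mono_le[of "\<lambda>t. snd (st t)"] \<open>s \<le> t\<close> by blast
qed

end



context ccw begin

lemma slot_i:
  assumes I: "Inv (i,l)" and d: "i < m" "l < k" "cross2 (E i) (E l) < 0" and q: "q < k"
  shows "cross2 (E i) (p q - p l) \<le> 0"
proof -
  have ml: "m \<le> l" and I2: "m < l \<Longrightarrow> cross2 (E i) (E (l-1)) > 0" using I d by (auto simp: Inv_def)
  have l1: "0 < l" using ml m_props by simp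
  have pv: "prv l = l - 1" using prv_pos[OF l1 d(2)] .
  have h1: "cross2 (E i) (E (l-1)) \<ge> 0"
  proof (cases "m < l")
    case True then show ?thesis using I2 by simp
  next
    case False
    hence lm: "l = m" using ml by simp
    show ?thesis
    proof (cases "i = m - 1")
      case True then show ?thesis using lm by simp
    next
      case False
      hence "i < m - 1" using d by simp
      then show ?thesis using S1[of i "m-1"] lm m_props by simp
    qed
  qed
  have "cross2 (- E i) (p q - p l) \<ge> 0"
    using W[OF d(2) q, of "- E i"] pv h1 d(3) by simp
  thus ?thesis by simp
qed

lemma slot_l:
  assumes I: "Inv (i,l)" and d: "l < k" and c: "i = m \<or> cross2 (E i) (E l) > 0" and q: "q < k"
  shows "cross2 (E l) (p q - p i) \<le> 0"
proof -
  have im: "i \<le> m" and ml: "m \<le> l" and I1: "0 < i \<Longrightarrow> cross2 (E (i-1)) (E l) < 0"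
    using I d by (auto simp: Inv_def)
  have ik: "i < k" using im m_lt_k by simp
  have h1: "cross2 (E l) (E (prv i)) \<ge> 0"
  proof (cases "i = 0")
    case True
    have pv: "prv i = k - 1" using True prv_0 by simp
    show ?thesis
    proof (cases "l = k - 1")
      case True then show ?thesis using pv by simp
    next
      case False
      hence "l < k - 1" using d by simp
      then show ?thesis using S2[OF ml, of "k-1"] pv by simp
    qed
  next
    case False
    hence "prv i = i - 1" using prv_pos ik by simp
    then show ?thesis using I1 False cross_anti[of "E l" "E (i-1)"] by simp
  qed
  have h2: "cross2 (E l) (E i) \<le> 0"
  proof (cases "i = m")
    case True
    show ?thesis
    proof (cases "l = m")
      case True then show ?thesis using \<open>i = m\<close> by simp
    next
      case False
      then have "cross2 (E m) (E l) > 0" using S2[of m l] ml d by simp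
      then show ?thesis using True cross_anti[of "E l" "E m"] by simp
    qed
  next
    case False
    then show ?thesis using c cross_anti[of "E l" "E i"] by simp
  qed
  have "cross2 (- E l) (p q - p i) \<ge> 0"
    using W[OF ik q, of "- E l"] h1 h2 by simp
  thus ?thesis by simp
qed

lemma par_E: "i < k \<Longrightarrow> l < k \<Longrightarrow> cross2 (E i) (E l) = 0 \<Longrightarrow> parallel_vec (E i) (E l)"
  unfolding parallel_vec_def using E_nz par_of_cross0 by blast

lemma slot:
  assumes t: "t < N"
  defines "x \<equiv> fst (st t)" and "l \<equiv> snd (st t)" and "x' \<equiv> fst (st (Suc t))" and "l' \<equiv> snd (st (Suc t))"
  shows "l < k \<and> x' \<le> m \<and>
     ((x' = x+1 \<and> l' = l+1 \<and> parallel_vec (E x) (E l)) \<or>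
      (x' = x+1 \<and> l' = l \<and> (\<forall>q<k. cross2 (E x) (p q - p l) \<le> 0)) \<or>
      (x' = x \<and> l' = l+1 \<and> (\<forall>q<k. cross2 (E l) (p q - p x) \<le> 0)))"
proof -
  have I: "Inv (x,l)" using Inv_st[of t] t by (simp add: x_def l_def)
  have lk: "l < k" and xm: "x \<le> m" using st_lk[OF t] by (auto simp: x_def l_def)
  have x'm: "x' \<le> m" using Inv_st[of "Suc t"] t by (simp add: x'_def Inv_def Let_def)
  have sn: "st (Suc t) = nxt (x,l)" by (simp add: st_Suc x_def l_def)
  show ?thesis
  proof (cases "isdiag (x,l)")
    case True
    hence "x < m" "cross2 (E x) (E l) = 0" by (auto simp: isdiag_def)
    moreover have "x < k" using \<open>x<m\<close> m_lt_k by simp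
    ultimately have "parallel_vec (E x) (E l)" using par_E lk by blast
    moreover have "x' = x+1" "l' = l+1" using True sn by (auto simp: x'_def l'_def nxt_def)
    ultimately show ?thesis using lk x'm by simp
  next
    case False
    note nd = False
    show ?thesis
    proof (cases "x < m \<and> (k \<le> l \<or> cross2 (E x) (E l) < 0)")
      case True
      hence "x' = x+1" "l' = l" using nd sn by (auto simp: x'_def l'_def nxt_def)
      moreover have "\<forall>q<k. cross2 (E x) (p q - p l) \<le> 0" using slot_i[OF I] True lk by auto
      ultimately show ?thesis using lk x'm by simp
    next
      case False
      hence "x' = x" "l' = l+1" using nd sn by (auto simp: x'_def l'_def nxt_def)
      moreover have "x = m \<or> cross2 (E x) (E l) > 0" using False nd lk xm by (auto simp: isdiag_def)
      hence "\<forall>q<k. cross2 (E l) (p q - p x) \<le> 0" using slot_l[OF I lk] by auto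
      ultimately show ?thesis using lk x'm by simp
    qed
  qed
qed

lemma PS_eq: "{(a, b). a < b \<and> b < k \<and> parallel_vec (E a) (E b)} = st ` Dg"
proof
  show "st ` Dg \<subseteq> {(a, b). a < b \<and> b < k \<and> parallel_vec (E a) (E b)}"
  proof
    fix s assume "s \<in> st ` Dg"
    then obtain t where t: "t < N" "isdiag (st t)" "s = st t" by (auto simp: Dg_def)
    have lk: "snd (st t) < k" "m \<le> snd (st t)" using st_lk[OF t(1)] by auto
    have d: "fst (st t) < m" "cross2 (E (fst (st t))) (E (snd (st t))) = 0" using t by (auto simp: isdiag_def)
    have "parallel_vec (E (fst (st t))) (E (snd (st t)))" using par_E d lk m_lt_k by simp
    thus "s \<in> {(a, b). a < b \<and> b < k \<and> parallel_vec (E a) (E b)}"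
      using t lk d by (cases "st t") auto
  qed
next
  show "{(a, b). a < b \<and> b < k \<and> parallel_vec (E a) (E b)} \<subseteq> st ` Dg"
  proof
    fix s assume "s \<in> {(a, b). a < b \<and> b < k \<and> parallel_vec (E a) (E b)}"
    then obtain a b where s: "s = (a,b)" "a < b" "b < k" "parallel_vec (E a) (E b)" by auto
    have cr: "cross2 (E a) (E b) = 0" using s(4) cross0_of_par unfolding parallel_vec_def by blast
    have am: "a < m"
    proof (rule ccontr)
      assume "\<not> a < m" thus False using S2[of a b] s cr by simp
    qed
    have mb: "m \<le> b"
    proof (rule ccontr)
      assume "\<not> m \<le> b" thus False using S1[of a b] s cr by simp
    qed
    have hyp: "\<forall>t<N. fst (st (Suc t)) = fst (st t) \<or> fst (st (Suc t)) = Suc (fst (st t))"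
      using nxt_fst by (simp add: st_Suc)
    obtain t where t: "t < N" "fst (st t) = a" "fst (st (Suc t)) = Suc a"
      using ivt_step[OF hyp, of a] am stN by (auto simp: st_0)
    define l where "l = snd (st t)"
    have I: "Inv (a,l)" using Inv_st[of t] t by (cases "st t") (simp add: l_def)
    have lk: "l < k" "m \<le> l" using st_lk[OF t(1)] by (auto simp: l_def)
    have I2: "m < l \<Longrightarrow> cross2 (E a) (E (l-1)) > 0" using I am by (simp add: Inv_def)
    have sn: "st (Suc t) = nxt (a,l)" using t by (cases "st t") (simp add: st_Suc l_def)
    have step: "isdiag (a,l) \<or> cross2 (E a) (E l) < 0"
    proof (rule ccontr)
      assume "\<not> ?thesis"
      hence "fst (nxt (a,l)) = a" using lk by (auto simp: nxt_def)
      thus False using t sn by simp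
    qed
    have cdl: "isdiag (a,l) \<Longrightarrow> cross2 (E a) (E l) = 0" by (simp add: isdiag_def)
    have HA: "Hp g (E a)" using A_Hp am .
    have lb: "l = b"
    proof (rule ccontr)
      assume nlb: "l \<noteq> b"
      show False
      proof (cases "l < b")
        case True
        have o: "cross2 (- E l) (- E b) > 0" using S2[of l b] True lk s by simp
        have "cross2 (E a) (- E b) > 0"
        proof (cases "isdiag (a,l)")
          case True
          have z: "cross2 (E a) (- E l) = 0" using cdl True by simp
          show ?thesis using T2[OF g_nz HA B_Hp[OF lk(2,1)] B_Hp[OF mb s(3)] z o] .
        next
          case False
          hence z: "cross2 (E a) (- E l) > 0" using step by simp
          show ?thesis using T1[OF g_nz HA B_Hp[OF lk(2,1)] B_Hp[OF mb s(3)] z o] .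
        qed
        thus False using cr by simp
      next
        case False
        hence bl: "b < l" using nlb by simp
        have "cross2 (- E b) (E a) > 0"
        proof (cases "isdiag (a,l)")
          case True
          have o: "cross2 (- E b) (- E l) > 0" using S2[of b l] bl mb lk by simp
          have z: "cross2 (- E l) (E a) = 0" using cdl True cross_anti[of "E l" "E a"] by simp
          show ?thesis using T3[OF g_nz B_Hp[OF mb s(3)] B_Hp[OF lk(2,1)] HA o z] .
        next
          case False
          have h: "cross2 (- E (l-1)) (E a) > 0"
            using I2 bl mb cross_anti[of "E (l-1)" "E a"] by simp
          show ?thesis
          proof (cases "b = l - 1")
            case True then show ?thesis using h by simp
          next
            case False
            hence o: "cross2 (- E b) (- E (l-1)) > 0" using S2[of b "l-1"] bl mb lk by simp
            show ?thesis using T1[OF g_nz B_Hp[OF mb s(3)] B_Hp _ o h] bl mb lk HA by simp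
          qed
        qed
        thus False using cr cross_anti[of "E b" "E a"] by simp
      qed
    qed
    have "isdiag (a,l)" using step lb cr by auto
    hence "t \<in> Dg" using t by (cases "st t") (auto simp: Dg_def l_def)
    moreover have "st t = s" using t lb s by (cases "st t") (simp add: l_def)
    ultimately show "s \<in> st ` Dg" by blast
  qed
qed

lemma count: "num_parallel_pairs k p = card Dg"
proof -
  have "num_parallel_pairs k p = card (st ` Dg)" unfolding num_parallel_pairs_def PS_eq ..
  also have "\<dots> = card Dg" using st_inj by (simp add: card_image inj_on_subset)
  finally show ?thesis .
qed

lemma N_n: "N = k - num_parallel_pairs k p" using N_count count by simp

end



definition supp :: "nat \<Rightarrow> (nat \<Rightarrow> real^2) \<Rightarrow> real^2 \<Rightarrow> real^2 \<Rightarrow> bool" where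
  "supp k p v e \<longleftrightarrow> (\<forall>q<k. cross2 e (p q - v) \<le> 0) \<or> (\<forall>q<k. cross2 e (p q - v) \<ge> 0)"

definition good :: "nat \<Rightarrow> (nat \<Rightarrow> real^2) \<Rightarrow> nat \<Rightarrow> (nat \<Rightarrow> real^2) \<Rightarrow> (nat \<Rightarrow> nat) \<Rightarrow> bool" where
  "good k p n P \<sigma> \<longleftrightarrow> mono_on {..<2*n} \<sigma> \<and> \<sigma> ` {..<2*n} = {..<k} \<and>
           (\<forall>i<2*n. P i = p (\<sigma> i)) \<and>
           (\<forall>i<n.
              let a = P i; b = P ((i+1) mod (2*n));
                  c = P (i+n); d = P ((i+n+1) mod (2*n)) in
              parallel_vec (b - a) (d - c)
              \<or> (c = d \<and> a \<noteq> b \<and> supp k p c (b - a))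
              \<or> (a = b \<and> c \<noteq> d \<and> supp k p a (d - c)))"

context ccw begin

lemma main: "\<exists>P \<sigma>. good k p (k - num_parallel_pairs k p) P \<sigma>"
proof -
  define \<sigma> where "\<sigma> t = (if t < N then fst (st t) else snd (st (t - N)))" for t
  define P where "P t = p (\<sigma> t)" for t
  have N1: "0 < N" using stN m_lt_k by (metis gr0I st_0 prod.inject less_not_refl)
  have mono: "mono_on {..<2*N} \<sigma>"
  proof (rule mono_onI)
    fix r s assume "r \<in> {..<2*N}" "s \<in> {..<2*N}" "r \<le> s"
    show "\<sigma> r \<le> \<sigma> s"
    proof (cases "s < N")
      case True then show ?thesis using \<open>r \<le> s\<close> fst_mono by (simp add: \<sigma>_def)
    next
      case False
      hence s: "\<sigma> s = snd (st (s - N))" by (simp add: \<sigma>_def)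
      show ?thesis
      proof (cases "r < N")
        case True
        have "fst (st r) \<le> m" using st_lk True by simp
        moreover have "m \<le> snd (st (s - N))" using snd_mono[of 0 "s - N"] by (simp add: st_0)
        ultimately show ?thesis using True s by (simp add: \<sigma>_def)
      next
        case False
        then show ?thesis using s snd_mono[of "r - N" "s - N"] \<open>r \<le> s\<close> by (simp add: \<sigma>_def)
      qed
    qed
  qed
  have img: "\<sigma> ` {..<2*N} = {..<k}"
  proof
    show "\<sigma> ` {..<2*N} \<subseteq> {..<k}"
    proof
      fix v assume "v \<in> \<sigma> ` {..<2*N}"
      then obtain t where t: "t < 2*N" "v = \<sigma> t" by auto
      show "v \<in> {..<k}"
      proof (cases "t < N")
        case True then show ?thesis using st_lk[OF True] m_lt_k t by (simp add: \<sigma>_def)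
      next
        case False
        hence "t - N < N" using t by simp
        then show ?thesis using st_lk False t by (simp add: \<sigma>_def)
      qed
    qed
  next
    show "{..<k} \<subseteq> \<sigma> ` {..<2*N}"
    proof
      fix v assume v: "v \<in> {..<k}"
      show "v \<in> \<sigma> ` {..<2*N}"
      proof (cases "v < m")
        case True
        have hyp: "\<forall>t<N. fst (st (Suc t)) = fst (st t) \<or> fst (st (Suc t)) = Suc (fst (st t))"
          using nxt_fst by (simp add: st_Suc)
        obtain t where "t < N" "fst (st t) = v" using ivt_step[OF hyp, of v] True stN by (auto simp: st_0)
        then show ?thesis by (intro image_eqI[of _ _ t]) (auto simp: \<sigma>_def)
      next
        case False
        have hyp: "\<forall>t<N. snd (st (Suc t)) = snd (st t) \<or> snd (st (Suc t)) = Suc (snd (st t))"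
          using nxt_snd by (simp add: st_Suc)
        obtain t where "t < N" "snd (st t) = v" using ivt_step[OF hyp, of v] False v stN by (auto simp: st_0)
        then show ?thesis by (intro image_eqI[of _ _ "t + N"]) (auto simp: \<sigma>_def)
      qed
    qed
  qed
  have pair: "\<forall>i<N.
              let a = P i; b = P ((i+1) mod (2*N));
                  c = P (i+N); d = P ((i+N+1) mod (2*N)) in
              parallel_vec (b - a) (d - c)
              \<or> (c = d \<and> a \<noteq> b \<and> supp k p c (b - a))
              \<or> (a = b \<and> c \<noteq> d \<and> supp k p a (d - c))"
  proof (intro allI impI)
    fix i assume i: "i < N"
    define x where "x = fst (st i)"
    define l where "l = snd (st i)"
    define x' where "x' = fst (st (Suc i))"
    define l' where "l' = snd (st (Suc i))"
    have sl: "l < k \<and> x' \<le> m \<and>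
     ((x' = x+1 \<and> l' = l+1 \<and> parallel_vec (E x) (E l)) \<or>
      (x' = x+1 \<and> l' = l \<and> (\<forall>q<k. cross2 (E x) (p q - p l) \<le> 0)) \<or>
      (x' = x \<and> l' = l+1 \<and> (\<forall>q<k. cross2 (E l) (p q - p x) \<le> 0)))"
      using slot[OF i] unfolding x_def l_def x'_def l'_def .
    have Pa: "P i = p x" using i by (simp add: P_def \<sigma>_def x_def)
    have Pb: "P ((i+1) mod (2*N)) = p x'"
    proof -
      have "(i+1) mod (2*N) = i+1" using i by simp
      moreover have "\<sigma> (i+1) = x'"
      proof (cases "i+1 < N")
        case True then show ?thesis by (simp add: \<sigma>_def x'_def)
      next
        case False
        hence "i+1 = N" using i by simp
        then show ?thesis using stN by (simp add: \<sigma>_def x'_def st_0)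
      qed
      ultimately show ?thesis by (simp add: P_def)
    qed
    have Pc: "P (i+N) = p l" by (simp add: P_def \<sigma>_def l_def)
    have Pd: "P ((i+N+1) mod (2*N)) = p (l' mod k)"
    proof (cases "i+1 < N")
      case True
      hence "(i+N+1) mod (2*N) = Suc i + N" by simp
      moreover have "l' < k" using st_lk[OF True] by (simp add: l'_def)
      ultimately show ?thesis by (simp add: P_def \<sigma>_def l'_def)
    next
      case False
      hence iN: "i+1 = N" using i by simp
      hence e: "i+N+1 = 2*N" by simp
      have "(i+N+1) mod (2*N) = 0" by (simp only: e mod_self)
      moreover have "l' = k" using stN iN by (simp add: l'_def)
      ultimately show ?thesis using N1 by (simp add: P_def \<sigma>_def st_0)
    qed
    have xk: "x < m \<Longrightarrow> E x = p (x+1) - p x"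
      using m_lt_k by (simp add: E_def')
    have lE: "E l = p (Suc l mod k) - p l" by (simp add: E_def')
    have xmk: "x < k" using st_lk[OF i] m_lt_k by (simp add: x_def)
    show "let a = P i; b = P ((i+1) mod (2*N));
                  c = P (i+N); d = P ((i+N+1) mod (2*N)) in
              parallel_vec (b - a) (d - c)
              \<or> (c = d \<and> a \<noteq> b \<and> supp k p c (b - a))
              \<or> (a = b \<and> c \<noteq> d \<and> supp k p a (d - c))"
      unfolding Let_def Pa Pb Pc Pd
    proof -
      from sl consider (A) "x' = x+1" "l' = l+1" "parallel_vec (E x) (E l)"
        | (B) "x' = x+1" "l' = l" "\<forall>q<k. cross2 (E x) (p q - p l) \<le> 0"
        | (C) "x' = x" "l' = l+1" "\<forall>q<k. cross2 (E l) (p q - p x) \<le> 0" by blast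
      then show "parallel_vec (p x' - p x) (p (l' mod k) - p l) \<or>
        p l = p (l' mod k) \<and> p x \<noteq> p x' \<and> supp k p (p l) (p x' - p x) \<or>
        p x = p x' \<and> p l \<noteq> p (l' mod k) \<and> supp k p (p x) (p (l' mod k) - p l)"
      proof cases
        case A
        have "x < m" using A sl by simp
        then show ?thesis using A xk lE by simp
      next
        case B
        have "x < m" using B sl by simp
        hence e: "p x' - p x = E x" using xk B by simp
        have "E x \<noteq> 0" using E_nz xmk by simp
        then show ?thesis using B e sl by (auto simp: supp_def)
      next
        case C
        have e: "p (l' mod k) - p l = E l" using C lE by simp
        have "E l \<noteq> 0" using E_nz sl by simp
        then show ?thesis using C e by (auto simp: supp_def)
      qed
    qed
  qed
  show ?thesis unfolding good_def N_n[symmetric]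
    by (rule exI[of _ P], rule exI[of _ \<sigma>]) (use mono img pair in \<open>simp add: P_def\<close>)
qed

end



lemma inner_cross: "inner (vector [-(e$2), e$1] :: real^2) x = cross2 e x"
  by (simp add: inner_vec_def sum_2 cross2_def)

lemma supp_disj:
  assumes s: "supp k p v e" and e: "e \<noteq> 0"
  shows "line_dir v e \<inter> polygon_interior k p = {}"
proof -
  define w :: "real^2" where "w = vector [-(e$2), e$1]"
  have wc: "\<And>x. inner w x = cross2 e x" unfolding w_def by (rule inner_cross)
  have wnz: "w \<noteq> 0" using e unfolding w_def by (auto simp: vec2_eq)
  have line: "\<And>x. x \<in> line_dir v e \<Longrightarrow> inner w x = inner w v"
    by (auto simp: line_dir_def wc cross_add cross_scale)
  from s show ?thesis
  proof (unfold supp_def, elim disjE)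
    assume h: "\<forall>q<k. cross2 e (p q - v) \<le> 0"
    have "p ` {..<k} \<subseteq> {x. inner w x \<le> inner w v}"
      using h by (auto simp: wc cross_diff)
    hence "convex hull (p ` {..<k}) \<subseteq> {x. inner w x \<le> inner w v}"
      by (intro hull_minimal) (auto simp: convex_halfspace_le)
    hence "polygon_interior k p \<subseteq> {x. inner w x < inner w v}"
      unfolding polygon_interior_def using interior_mono interior_halfspace_le[OF wnz] by blast
    thus ?thesis using line by fastforce
  next
    assume h: "\<forall>q<k. 0 \<le> cross2 e (p q - v)"
    have "p ` {..<k} \<subseteq> {x. inner w x \<ge> inner w v}"
      using h by (auto simp: wc cross_diff)
    hence "convex hull (p ` {..<k}) \<subseteq> {x. inner w x \<ge> inner w v}"
      by (intro hull_minimal) (auto simp: convex_halfspace_ge)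
    hence "polygon_interior k p \<subseteq> {x. inner w x > inner w v}"
      unfolding polygon_interior_def using interior_mono interior_halfspace_ge[OF wnz] by blast
    thus ?thesis using line by fastforce
  qed
qed

definition rf :: "real^2 \<Rightarrow> real^2" where "rf x = vector [x$2, x$1]"

lemma rf_comp[simp]: "rf x $ 1 = x $ 2" "rf x $ 2 = x $ 1" by (simp_all add: rf_def)
lemma rf_rf[simp]: "rf (rf x) = x" by (simp add: vec2_eq)
lemma rf_diff: "rf (x - y) = rf x - rf y" by (simp add: vec2_eq)
lemma rf_scale: "rf (c *\<^sub>R x) = c *\<^sub>R rf x" by (simp add: vec2_eq)
lemma rf_eq[simp]: "rf x = rf y \<longleftrightarrow> x = y" by (metis rf_rf)
lemma rf_0[simp]: "rf x = 0 \<longleftrightarrow> x = 0" by (auto simp: vec2_eq)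
lemma rf_cross: "cross2 (rf a) (rf b) = - cross2 a b" by (simp add: cross2_def)

lemma rf_par: "parallel_vec (rf u) (rf v) \<longleftrightarrow> parallel_vec u v"
proof -
  have "(\<exists>c. rf u = c *\<^sub>R rf v) \<longleftrightarrow> (\<exists>c. u = c *\<^sub>R v)"
    by (metis rf_scale rf_eq)
  thus ?thesis by (simp add: parallel_vec_def)
qed

lemma rf_side: "side_vec k (rf \<circ> p) a = rf (side_vec k p a)"
  by (simp add: side_vec_def rf_diff)

lemma rf_npp: "num_parallel_pairs k (rf \<circ> p) = num_parallel_pairs k p"
  by (simp add: num_parallel_pairs_def rf_side rf_par)

lemma rf_supp: "supp k (rf \<circ> p) c e \<Longrightarrow> supp k p (rf c) (rf e)"
proof -
  have "\<And>q. cross2 (rf e) (p q - rf c) = - cross2 e (rf (p q) - c)"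
    by (metis rf_cross rf_diff rf_rf)
  thus "supp k (rf \<circ> p) c e \<Longrightarrow> supp k p (rf c) (rf e)" by (auto simp: supp_def)
qed

lemma pair_rf:
  assumes "parallel_vec (b-a) (d-c) \<or> (c=d \<and> a\<noteq>b \<and> supp k (rf\<circ>p) c (b-a)) \<or> (a=b \<and> c\<noteq>d \<and> supp k (rf\<circ>p) a (d-c))"
  shows "parallel_vec (rf b - rf a) (rf d - rf c) \<or> (rf c = rf d \<and> rf a \<noteq> rf b \<and> supp k p (rf c) (rf b - rf a))
     \<or> (rf a = rf b \<and> rf c \<noteq> rf d \<and> supp k p (rf a) (rf d - rf c))"
proof -
  have "parallel_vec (rf (b-a)) (rf (d-c)) \<or> (rf c = rf d \<and> rf a \<noteq> rf b \<and> supp k p (rf c) (rf (b-a)))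
     \<or> (rf a = rf b \<and> rf c \<noteq> rf d \<and> supp k p (rf a) (rf (d-c)))"
    using assms rf_par rf_supp rf_eq by metis
  thus ?thesis by (simp add: rf_diff)
qed

lemma good_rf: assumes "good k (rf \<circ> p) n P \<sigma>" shows "good k p n (rf \<circ> P) \<sigma>"
proof -
  have a: "mono_on {..<2*n} \<sigma>" "\<sigma> ` {..<2*n} = {..<k}" "\<forall>i<2*n. P i = (rf \<circ> p) (\<sigma> i)"
    using assms unfolding good_def by auto
  have b: "\<forall>i<n. parallel_vec (P ((i+1) mod (2*n)) - P i) (P ((i+n+1) mod (2*n)) - P (i+n))
              \<or> (P (i+n) = P ((i+n+1) mod (2*n)) \<and> P i \<noteq> P ((i+1) mod (2*n)) \<and> supp k (rf\<circ>p) (P (i+n)) (P ((i+1) mod (2*n)) - P i))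
              \<or> (P i = P ((i+1) mod (2*n)) \<and> P (i+n) \<noteq> P ((i+n+1) mod (2*n)) \<and> supp k (rf\<circ>p) (P i) (P ((i+n+1) mod (2*n)) - P (i+n)))"
    using assms unfolding good_def Let_def by blast
  have c: "\<forall>i<n. parallel_vec (rf (P ((i+1) mod (2*n))) - rf (P i)) (rf (P ((i+n+1) mod (2*n))) - rf (P (i+n)))
              \<or> (rf (P (i+n)) = rf (P ((i+n+1) mod (2*n))) \<and> rf (P i) \<noteq> rf (P ((i+1) mod (2*n))) \<and> supp k p (rf (P (i+n))) (rf (P ((i+1) mod (2*n))) - rf (P i)))
              \<or> (rf (P i) = rf (P ((i+1) mod (2*n))) \<and> rf (P (i+n)) \<noteq> rf (P ((i+n+1) mod (2*n))) \<and> supp k p (rf (P i)) (rf (P ((i+n+1) mod (2*n))) - rf (P (i+n))))"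
  proof (intro allI impI)
    fix i assume "i < n"
    with b have "parallel_vec (P ((i+1) mod (2*n)) - P i) (P ((i+n+1) mod (2*n)) - P (i+n))
              \<or> (P (i+n) = P ((i+n+1) mod (2*n)) \<and> P i \<noteq> P ((i+1) mod (2*n)) \<and> supp k (rf\<circ>p) (P (i+n)) (P ((i+1) mod (2*n)) - P i))
              \<or> (P i = P ((i+1) mod (2*n)) \<and> P (i+n) \<noteq> P ((i+n+1) mod (2*n)) \<and> supp k (rf\<circ>p) (P i) (P ((i+n+1) mod (2*n)) - P (i+n)))"
      by blast
    from pair_rf[OF this] show "parallel_vec (rf (P ((i+1) mod (2*n))) - rf (P i)) (rf (P ((i+n+1) mod (2*n))) - rf (P (i+n)))
              \<or> (rf (P (i+n)) = rf (P ((i+n+1) mod (2*n))) \<and> rf (P i) \<noteq> rf (P ((i+1) mod (2*n))) \<and> supp k p (rf (P (i+n))) (rf (P ((i+1) mod (2*n))) - rf (P i)))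
              \<or> (rf (P i) = rf (P ((i+1) mod (2*n))) \<and> rf (P (i+n)) \<noteq> rf (P ((i+n+1) mod (2*n))) \<and> supp k p (rf (P i)) (rf (P ((i+n+1) mod (2*n))) - rf (P (i+n))))"
      .
  qed
  have d: "\<forall>i<2*n. rf (P i) = p (\<sigma> i)" using a(3) by simp
  show ?thesis unfolding good_def Let_def comp_apply using a(1,2) c d by blast
qed

lemma good_final:
  assumes "good k p n P \<sigma>"
  shows "mono_on {..<2*n} \<sigma> \<and> \<sigma> ` {..<2*n} = {..<k} \<and>
           (\<forall>i<2*n. P i = p (\<sigma> i)) \<and>
           (\<forall>i<n.
              let a = P i; b = P ((i+1) mod (2*n));
                  c = P (i+n); d = P ((i+n+1) mod (2*n)) in
              parallel_vec (b - a) (d - c)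
              \<or> (c = d \<and> a \<noteq> b \<and> line_dir c (b - a) \<inter> polygon_interior k p = {})
              \<or> (a = b \<and> c \<noteq> d \<and> line_dir a (d - c) \<inter> polygon_interior k p = {}))"
proof -
  have a: "mono_on {..<2*n} \<sigma>" "\<sigma> ` {..<2*n} = {..<k}" "\<forall>i<2*n. P i = p (\<sigma> i)"
    using assms unfolding good_def by auto
  have b: "\<forall>i<n. parallel_vec (P ((i+1) mod (2*n)) - P i) (P ((i+n+1) mod (2*n)) - P (i+n))
              \<or> (P (i+n) = P ((i+n+1) mod (2*n)) \<and> P i \<noteq> P ((i+1) mod (2*n)) \<and> supp k p (P (i+n)) (P ((i+1) mod (2*n)) - P i))
              \<or> (P i = P ((i+1) mod (2*n)) \<and> P (i+n) \<noteq> P ((i+n+1) mod (2*n)) \<and> supp k p (P i) (P ((i+n+1) mod (2*n)) - P (i+n)))"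
    using assms unfolding good_def Let_def by blast
  show ?thesis unfolding Let_def
  proof (intro conjI allI impI)
    show "mono_on {..<2*n} \<sigma>" "\<sigma> ` {..<2*n} = {..<k}" using a by auto
  next
    fix i assume "i < 2*n" thus "P i = p (\<sigma> i)" using a by simp
  next
    fix i assume "i < n"
    with b have h: "parallel_vec (P ((i+1) mod (2*n)) - P i) (P ((i+n+1) mod (2*n)) - P (i+n))
              \<or> (P (i+n) = P ((i+n+1) mod (2*n)) \<and> P i \<noteq> P ((i+1) mod (2*n)) \<and> supp k p (P (i+n)) (P ((i+1) mod (2*n)) - P i))
              \<or> (P i = P ((i+1) mod (2*n)) \<and> P (i+n) \<noteq> P ((i+n+1) mod (2*n)) \<and> supp k p (P i) (P ((i+n+1) mod (2*n)) - P (i+n)))"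
      by blast
    show "parallel_vec (P ((i+1) mod (2*n)) - P i) (P ((i+n+1) mod (2*n)) - P (i+n))
              \<or> (P (i+n) = P ((i+n+1) mod (2*n)) \<and> P i \<noteq> P ((i+1) mod (2*n)) \<and> line_dir (P (i+n)) (P ((i+1) mod (2*n)) - P i) \<inter> polygon_interior k p = {})
              \<or> (P i = P ((i+1) mod (2*n)) \<and> P (i+n) \<noteq> P ((i+n+1) mod (2*n)) \<and> line_dir (P i) (P ((i+n+1) mod (2*n)) - P (i+n)) \<inter> polygon_interior k p = {})"
      using h supp_disj by (metis eq_iff_diff_eq_0)
  qed
qed

theorem lemma2p2:
  fixes k j n :: nat and p :: "nat \<Rightarrow> real^2"
  assumes "convex_polygon k p"
    and "j = num_parallel_pairs k p"
    and "n = k - j"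
  shows "\<exists>(P :: nat \<Rightarrow> real^2) (\<sigma> :: nat \<Rightarrow> nat).
           mono_on {..<2*n} \<sigma> \<and> \<sigma> ` {..<2*n} = {..<k} \<and>
           (\<forall>i<2*n. P i = p (\<sigma> i)) \<and>
           (\<forall>i<n.
              let a = P i; b = P ((i+1) mod (2*n));
                  c = P (i+n); d = P ((i+n+1) mod (2*n)) in
              parallel_vec (b - a) (d - c)
              \<or> (c = d \<and> a \<noteq> b \<and> line_dir c (b - a) \<inter> polygon_interior k p = {})
              \<or> (a = b \<and> c \<noteq> d \<and> line_dir a (d - c) \<inter> polygon_interior k p = {}))"
proof -
  have k3: "k \<ge> 3" using assms(1) by (simp add: convex_polygon_def)
  have "\<exists>P \<sigma>. good k p n P \<sigma>"
  proof (cases "\<forall>i<k. \<forall>l<k. l \<noteq> i \<and> l \<noteq> (i+1) mod k \<longrightarrow>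
          cross2 (p ((i+1) mod k) - p i) (p l - p i) > 0")
    case True
    interpret ccw k p using k3 True by unfold_locales auto
    show ?thesis using main assms by simp
  next
    case False
    hence cw: "\<forall>i<k. \<forall>l<k. l \<noteq> i \<and> l \<noteq> (i+1) mod k \<longrightarrow>
          cross2 (p ((i+1) mod k) - p i) (p l - p i) < 0"
      using assms(1) by (auto simp: convex_polygon_def)
    interpret r: ccw k "rf \<circ> p"
    proof (unfold_locales)
      show "3 \<le> k" by (rule k3)
      fix i l assume "i < k" "l < k" "l \<noteq> i" "l \<noteq> (i+1) mod k"
      thus "cross2 ((rf \<circ> p) ((i+1) mod k) - (rf \<circ> p) i) ((rf \<circ> p) l - (rf \<circ> p) i) > 0"
        using cw by (simp add: rf_diff[symmetric] rf_cross)
    qed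
    obtain P \<sigma> where "good k (rf \<circ> p) n P \<sigma>" using r.main assms rf_npp by auto
    thus ?thesis using good_rf by blast
  qed
  thus ?thesis using good_final by blast
qed



end
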